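(* The class of data languages accepted by SAFA is not closed under reversal: there exists a data language $L$ accepted by some SAFA such that no SAFA accepts $L^R=\{(a_n,d_n)\cdots(a_1,d_1): (a_1,d_1)\cdots(a_n,d_n)\in L\}$.
   Context: $D$ is a fixed countably infinite set of data values; for a finite alphabet $\Sigma$, data words are elements of $(\Sigma\times D)^*$. A set augmented finite automaton (SAFA) is a tuple $M=(Q,\Sigma\times D,q_0,F,H,\delta)$: $Q$ finite set of states, $q_0\in Q$ initial, $F\subseteq Q$ final, $H=\{h_1,\dots,h_m\}$ a finite collection of (names of) sets of data values, $\delta\subseteq Q\times\Sigma\times C\times OP\times Q$ with $C=\{p(h_i),\,!p(h_i): h_i\in H\}$, $OP=\{-\}\cup\{\mathsf{ins}(h_i):h_i\in H\}$. Configurations are $(q,\langle S_1,\dots,S_m\rangle)$ with $S_i\subseteq D$ finite; initially state $q_0$ and all sets empty. On reading $(a,d)$, a transition $(q,a,\alpha,op,q')$ from the current state may be taken if $\alpha=p(h_i)$ and $d\in S_i$, or $\alpha=\,!p(h_i)$ and $d\notin S_i$; then the state becomes $q'$ and if $op=\mathsf{ins}(h_j)$ the value $d$ is added to $S_j$ ($op=-$ changes nothing). A word is accepted if some run reads it entirely and ends in $F$; $L(M)$ is the set of accepted words. *)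

theory Defs
  imports Main "HOL-Library.Countable"
begin

(* Conditions p(h_i) and !p(h_i), operations - and ins(h_i).
   Set names h_1..h_m are represented by indices 0..<m. *)
datatype cond = P nat | NP nat
datatype oper = Nop | Ins nat

(* SAFA M = (Q, Sigma x D, q0, F, H, delta); states are natural numbers,
   letters are natural numbers (Sigma a finite set of them),
   H = {h_0, ..., h_(m-1)} is given by its size m. *)
record safa =
  states :: "nat set"
  alphabet :: "nat set"
  init :: nat
  final :: "nat set"
  nsets :: nat
  trans :: "(nat \<times> nat \<times> cond \<times> oper \<times> nat) set"

definition well_formed :: "safa \<Rightarrow> bool" where
  "well_formed M \<longleftrightarrow> finite (states M) \<and> finite (alphabet M) \<and>
     init M \<in> states M \<and> final M \<subseteq> states M \<and>
     (\<forall>(q,a,c,op,q') \<in> trans M. q \<in> states M \<and> a \<in> alphabet M \<and> q' \<in> states M \<and>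
        (case c of P i \<Rightarrow> i < nsets M | NP i \<Rightarrow> i < nsets M) \<and>
        (case op of Nop \<Rightarrow> True | Ins j \<Rightarrow> j < nsets M))"

type_synonym 'd config = "nat \<times> (nat \<Rightarrow> 'd set)"

fun sat :: "cond \<Rightarrow> (nat \<Rightarrow> 'd set) \<Rightarrow> 'd \<Rightarrow> bool" where
  "sat (P i) S d = (d \<in> S i)"
| "sat (NP i) S d = (d \<notin> S i)"

fun apply_op :: "oper \<Rightarrow> (nat \<Rightarrow> 'd set) \<Rightarrow> 'd \<Rightarrow> (nat \<Rightarrow> 'd set)" where
  "apply_op Nop S d = S"
| "apply_op (Ins j) S d = S(j := insert d (S j))"

definition step :: "safa \<Rightarrow> 'd config \<Rightarrow> nat \<times> 'd \<Rightarrow> 'd config \<Rightarrow> bool" where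
  "step M c ad c' \<longleftrightarrow> (\<exists>cnd op q'. (fst c, fst ad, cnd, op, q') \<in> trans M \<and>
       sat cnd (snd c) (snd ad) \<and> c' = (q', apply_op op (snd c) (snd ad)))"

fun run :: "safa \<Rightarrow> 'd config \<Rightarrow> (nat \<times> 'd) list \<Rightarrow> 'd config \<Rightarrow> bool" where
  "run M c [] c' = (c' = c)"
| "run M c (x # w) c' = (\<exists>c''. step M c x c'' \<and> run M c'' w c')"

definition accepts :: "safa \<Rightarrow> (nat \<times> 'd) list \<Rightarrow> bool" where
  "accepts M w \<longleftrightarrow> (\<exists>c'. run M (init M, \<lambda>_. {}) w c' \<and> fst c' \<in> final M)"

definition lang :: "safa \<Rightarrow> (nat \<times> 'd) list set" where
  "lang M = {w. set (map fst w) \<subseteq> alphabet M \<and> accepts M w}"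

definition rev_lang :: "'x list set \<Rightarrow> 'x list set" where
  "rev_lang L = rev ` L"

end

theory Submission
  imports Defs
begin

definition M0 :: safa where
  "M0 = \<lparr>states = {0,1}, alphabet = {0,1}, init = 0, final = {0,1}, nsets = 1,
         trans = {(0,0,P 0,Ins 0,0),(0,0,NP 0,Ins 0,0),(0,1,P 0,Nop,1),(1,1,P 0,Nop,1)}\<rparr>"

lemma wf_M0: "well_formed M0"
  by (auto simp: M0_def well_formed_def)

lemma run_append: "run M c (u @ v) c' \<longleftrightarrow> (\<exists>c''. run M c u c'' \<and> run M c'' v c')"
  by (induction u arbitrary: c) auto

lemma run_mono: "run M (q,S) v (q',S') \<Longrightarrow> S l \<subseteq> S' l"
proof (induction v arbitrary: q S)
  case Nil then show ?case by simp
next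
  case (Cons x v)
  then obtain q2 S2 where st: "step M (q,S) x (q2,S2)" and r: "run M (q2,S2) v (q',S')" by auto
  from st obtain cnd op where "S2 = apply_op op S (snd x)" by (auto simp: step_def)
  then have "S l \<subseteq> S2 l" by (cases op) auto
  with Cons.IH[OF r] show ?case by blast
qed

lemma run_sub: "run M (q,S) v (q',S') \<Longrightarrow> S' l \<subseteq> S l \<union> snd ` set v"
proof (induction v arbitrary: q S)
  case Nil then show ?case by simp
next
  case (Cons x v)
  then obtain q2 S2 where st: "step M (q,S) x (q2,S2)" and r: "run M (q2,S2) v (q',S')" by auto
  from st obtain cnd op where "S2 = apply_op op S (snd x)" by (auto simp: step_def)
  then have "S2 l \<subseteq> S l \<union> {snd x}" by (cases op) auto
  with Cons.IH[OF r] show ?case by auto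
qed

lemma run_agree: "run M (q,S) v (q',S') \<Longrightarrow> (\<forall>l. \<forall>d\<in>snd ` set v. (d \<in> S l) = (d \<in> T l))
   \<Longrightarrow> \<exists>T'. run M (q,T) v (q',T')"
proof (induction v arbitrary: q S T)
  case Nil then show ?case by simp
next
  case (Cons x v)
  then obtain q2 S2 where st: "step M (q,S) x (q2,S2)" and r: "run M (q2,S2) v (q',S')" by auto
  from st obtain cnd op where tr: "(q, fst x, cnd, op, q2) \<in> trans M" and sa: "sat cnd S (snd x)"
    and S2: "S2 = apply_op op S (snd x)" by (auto simp: step_def)
  have sa': "sat cnd T (snd x)" using sa Cons.prems(2) by (cases cnd) auto
  have ag: "\<forall>l. \<forall>d\<in>snd ` set v. (d \<in> S2 l) = (d \<in> apply_op op T (snd x) l)"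
    using Cons.prems(2) S2 by (cases op) auto
  obtain T' where "run M (q2, apply_op op T (snd x)) v (q',T')" using Cons.IH[OF r ag] by blast
  moreover have "step M (q,T) x (q2, apply_op op T (snd x))" using tr sa' by (auto simp: step_def)
  ultimately show ?case by auto
qed

lemma wf_P: "well_formed M \<Longrightarrow> (q,a,P l,op,q') \<in> trans M \<Longrightarrow> l < nsets M"
  unfolding well_formed_def by fastforce

lemma K:
  assumes wf: "well_formed M"
  shows "run M (q,S) (map (\<lambda>d. (0::nat,d)) xs) (q',S') \<Longrightarrow> distinct xs \<Longrightarrow> z \<notin> set xs
    \<Longrightarrow> (\<forall>l. z \<notin> S l) \<Longrightarrow> A \<subseteq> {..<nsets M} \<Longrightarrow> (\<forall>l\<in>A. \<exists>y. y \<in> S l \<and> y \<notin> set xs)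
    \<Longrightarrow> (\<exists>ys S''. run M (q,S) (map (\<lambda>d. (0,d)) ys) (q',S'') \<and> \<not> set xs \<subseteq> set ys)
        \<or> card A + length xs \<le> nsets M"
proof (induction xs arbitrary: q S A)
  case Nil
  then show ?case by (simp add: card_mono[of "{..<nsets M}", simplified])
next
  case (Cons x xs)
  then obtain q2 S2 where st: "step M (q,S) (0,x) (q2,S2)"
    and r: "run M (q2,S2) (map (\<lambda>d. (0::nat,d)) xs) (q',S')" by auto
  from st obtain cnd op where tr: "(q, 0, cnd, op, q2) \<in> trans M" and sa: "sat cnd S x"
    and S2: "S2 = apply_op op S x" by (auto simp: step_def)
  show ?case
  proof (cases cnd)
    case (NP l)
    have ag: "\<forall>l. \<forall>d\<in>snd ` set (map (\<lambda>d. (0::nat,d)) xs). (d \<in> S2 l) = (d \<in> apply_op op S z l)"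
      using Cons.prems S2 by (cases op) auto
    obtain T' where r2: "run M (q2, apply_op op S z) (map (\<lambda>d. (0::nat,d)) xs) (q',T')"
      using run_agree[OF r ag] by blast
    have "step M (q,S) (0,z) (q2, apply_op op S z)" using tr NP Cons.prems(4)
      by (auto simp: step_def intro!: exI[of _ "NP l"] exI[of _ op])
    with r2 have "run M (q,S) (map (\<lambda>d. (0,d)) (z#xs)) (q',T')" by auto
    moreover have "\<not> set (x#xs) \<subseteq> set (z#xs)" using Cons.prems by auto
    ultimately show ?thesis by blast
  next
    case (P l)
    show ?thesis
    proof (cases "l \<in> A")
      case True
      then obtain y where y: "y \<in> S l" "y \<notin> set (x#xs)" using Cons.prems(6) by blast
      have ag: "\<forall>l. \<forall>d\<in>snd ` set (map (\<lambda>d. (0::nat,d)) xs). (d \<in> S2 l) = (d \<in> apply_op op S y l)"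
        using Cons.prems S2 y by (cases op) auto
      obtain T' where r2: "run M (q2, apply_op op S y) (map (\<lambda>d. (0::nat,d)) xs) (q',T')"
        using run_agree[OF r ag] by blast
      have "step M (q,S) (0,y) (q2, apply_op op S y)" using tr P y
        by (auto simp: step_def intro!: exI[of _ "P l"] exI[of _ op])
      with r2 have "run M (q,S) (map (\<lambda>d. (0,d)) (y#xs)) (q',T')" by auto
      moreover have "\<not> set (x#xs) \<subseteq> set (y#xs)" using Cons.prems y by auto
      ultimately show ?thesis by blast
    next
      case False
      have l: "l < nsets M" using wf_P[OF wf] tr P by blast
      have xS: "x \<in> S l" using sa P by simp
      have sub: "\<And>l'. S l' \<subseteq> S2 l'" using S2 by (cases op) auto
      have z2: "\<forall>l. z \<notin> S2 l" using S2 Cons.prems(3,4) by (cases op) auto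
      have A2: "insert l A \<subseteq> {..<nsets M}" using l Cons.prems(5) by auto
      have W2: "\<forall>l'\<in>insert l A. \<exists>y. y \<in> S2 l' \<and> y \<notin> set xs"
        using Cons.prems(2,6) xS sub by fastforce
      have IH: "(\<exists>ys S''. run M (q2,S2) (map (\<lambda>d. (0,d)) ys) (q',S'') \<and> \<not> set xs \<subseteq> set ys)
        \<or> card (insert l A) + length xs \<le> nsets M"
        using Cons.IH[OF r _ _ z2 A2 W2] Cons.prems(2,3) by auto
      then show ?thesis
      proof
        assume "\<exists>ys S''. run M (q2,S2) (map (\<lambda>d. (0,d)) ys) (q',S'') \<and> \<not> set xs \<subseteq> set ys"
        then obtain ys S'' where "run M (q2,S2) (map (\<lambda>d. (0,d)) ys) (q',S'')" "\<not> set xs \<subseteq> set ys"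
          by blast
        then have "run M (q,S) (map (\<lambda>d. (0,d)) (x#ys)) (q',S'')" "\<not> set (x#xs) \<subseteq> set (x#ys)"
          using st Cons.prems(2) by auto
        then show ?thesis by blast
      next
        assume "card (insert l A) + length xs \<le> nsets M"
        moreover have "finite A" using Cons.prems(5) finite_subset by blast
        ultimately show ?thesis using False by simp
      qed
    qed
  qed
qed

lemma M0_sound: "run M0 (q,S) v (q',S') \<Longrightarrow>
   S' 0 \<subseteq> S 0 \<union> {d. (0,d) \<in> set v} \<and> (\<forall>d. (1,d) \<in> set v \<longrightarrow> d \<in> S' 0)"
proof (induction v arbitrary: q S)
  case Nil then show ?case by simp
next
  case (Cons x v)
  then obtain q2 S2 where st: "step M0 (q,S) x (q2,S2)" and r: "run M0 (q2,S2) v (q',S')" by auto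
  have m: "S2 0 \<subseteq> S' 0" using run_mono[OF r] .
  from st have "(fst x = 0 \<and> S2 0 \<subseteq> insert (snd x) (S 0)) \<or> (fst x = 1 \<and> S2 = S \<and> snd x \<in> S 0)"
    by (auto simp: step_def M0_def)
  with Cons.IH[OF r] m show ?case by (cases x) auto
qed

lemma M0_a: "run M0 (0,S) (map (\<lambda>d. (0,d)) xs) (0, S(0 := S 0 \<union> set xs))"
proof (induction xs arbitrary: S)
  case Nil then show ?case by simp
next
  case (Cons x xs)
  have st: "step M0 (0,S) (0,x) (0, S(0 := insert x (S 0)))"
    by (cases "x \<in> S 0") (auto simp: step_def M0_def intro!: exI[of _ "Ins 0"])
  define T where "T = S(0 := insert x (S 0))"
  have e: "T(0 := T 0 \<union> set xs) = S(0 := S 0 \<union> set (x#xs))"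
    by (auto simp: T_def)
  have r: "run M0 (0,T) (map (\<lambda>d. (0,d)) xs) (0, S(0 := S 0 \<union> set (x#xs)))"
    using Cons.IH[of T] unfolding e .
  show ?case using st r unfolding T_def by (subst list.map, subst run.simps(2)) blast
qed

lemma M0_b: "q \<in> {0,1} \<Longrightarrow> set ys \<subseteq> S 0 \<Longrightarrow> \<exists>q'\<in>{0,1}. run M0 (q,S) (map (\<lambda>d. (1,d)) ys) (q',S)"
proof (induction ys arbitrary: q)
  case Nil then show ?case by auto
next
  case (Cons y ys)
  have st: "step M0 (q,S) (1,y) (1, S)" using Cons.prems
    by (auto simp: step_def M0_def intro!: exI[of _ "P 0"] exI[of _ Nop])
  with Cons.IH[of 1] Cons.prems show ?case by auto
qed

theorem theorem8:
  assumes "infinite (UNIV :: 'd set)"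
  shows "\<exists>M. well_formed M \<and>
           (\<forall>M'. well_formed M' \<longrightarrow> lang M' \<noteq> rev_lang (lang M :: (nat \<times> 'd::countable) list set))"
proof (intro exI conjI allI impI)
  show "well_formed M0" by (rule wf_M0)
  fix M' assume wf: "well_formed M'"
  show "lang M' \<noteq> rev_lang (lang M0 :: (nat \<times> 'd) list set)"
  proof
    assume eq: "lang M' = rev_lang (lang M0 :: (nat \<times> 'd) list set)"
    obtain B :: "'d set" where B: "finite B" "card B = Suc (nsets M')"
      using infinite_arbitrarily_large[OF assms] by blast
    obtain es where es: "set es = B" "distinct es" using finite_distinct_list[OF B(1)] by blast
    have les: "length es = Suc (nsets M')" using es B distinct_card by metis
    obtain z :: 'd where z: "z \<notin> set es" using ex_new_if_finite[OF assms] by blast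
    define w where "w = map (\<lambda>d. (1::nat,d)) es @ map (\<lambda>d. (0,d)) es"
    have rw: "rev w = map (\<lambda>d. (0::nat,d)) (rev es) @ map (\<lambda>d. (1,d)) (rev es)"
      by (simp add: w_def rev_map)
    have "rev w \<in> lang M0"
    proof -
      have r1: "run M0 (0, \<lambda>_. {}) (map (\<lambda>d. (0::nat,d)) (rev es)) (0, (\<lambda>_. {})(0 := {} \<union> set (rev es)))"
        using M0_a by blast
      obtain q' where q': "q' \<in> {0,1}"
        "run M0 (0, (\<lambda>_. {})(0 := {} \<union> set (rev es))) (map (\<lambda>d. (1,d)) (rev es)) (q', (\<lambda>_. {})(0 := {} \<union> set (rev es)))"
        using M0_b[of 0 "rev es" "(\<lambda>_. {})(0 := {} \<union> set (rev es))"] by auto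
      have "accepts M0 (rev w)" unfolding accepts_def rw run_append
        using r1 q' by (auto simp: M0_def)
      moreover have "set (map fst (rev w)) \<subseteq> alphabet M0" by (auto simp: rw M0_def)
      ultimately show ?thesis by (simp add: lang_def)
    qed
    then have "w \<in> lang M'" unfolding eq rev_lang_def by (metis image_eqI rev_rev_ident)
    then have wa: "set (map fst w) \<subseteq> alphabet M'" and "accepts M' w" by (auto simp: lang_def)
    then obtain c' where "run M' (init M', \<lambda>_. {}) w c'" "fst c' \<in> final M'"
      by (auto simp: accepts_def)
    then obtain q S q' S' where r1: "run M' (init M', \<lambda>_. {}) (map (\<lambda>d. (1::nat,d)) es) (q,S)"
      and r2: "run M' (q,S) (map (\<lambda>d. (0::nat,d)) es) (q',S')" and fin: "q' \<in> final M'"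
      unfolding w_def run_append by (metis prod.collapse)
    have zS: "\<forall>l. z \<notin> S l" using run_sub[OF r1] z by fastforce
    from K[OF wf r2 es(2) z zS, of "{}"] les
    obtain ys S'' where r3: "run M' (q,S) (map (\<lambda>d. (0,d)) ys) (q',S'')" and ns: "\<not> set es \<subseteq> set ys"
      by auto
    define wb where "wb = map (\<lambda>d. (1::nat,d)) es @ map (\<lambda>d. (0,d)) ys"
    have "accepts M' wb" unfolding accepts_def wb_def run_append using r1 r3 fin by fastforce
    moreover have "set (map fst wb) \<subseteq> alphabet M'"
    proof -
      have "es \<noteq> []" using les by auto
      then have "set (map fst wb) \<subseteq> set (map fst w)" by (cases es) (auto simp: wb_def w_def)
      with wa show ?thesis by blast
    qed
    ultimately have "wb \<in> lang M'" by (simp add: lang_def)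
    then have "rev wb \<in> lang M0" unfolding eq rev_lang_def by auto
    then obtain c where rc: "run M0 (0, \<lambda>_. {}) (rev wb) c" by (auto simp: lang_def accepts_def M0_def)
    obtain qc Sc where "c = (qc, Sc)" by fastforce
    with rc M0_sound have snd: "Sc 0 \<subseteq> {d. (0,d) \<in> set (rev wb)}" "\<forall>d. (1,d) \<in> set (rev wb) \<longrightarrow> d \<in> Sc 0"
      by blast+
    have "set es \<subseteq> set ys"
    proof
      fix d assume "d \<in> set es"
      then have "(1,d) \<in> set (rev wb)" by (auto simp: wb_def)
      with snd have "(0,d) \<in> set (rev wb)" by blast
      then show "d \<in> set ys" by (auto simp: wb_def)
    qed
    with ns show False by blast
  qed
qed

end
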